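(* Let $\Gamma$ be a totally ordered set, $\sigma:\Gamma\to\Gamma$ an order-preserving embedding with $\sigma(\gamma)<\gamma$ for all $\gamma\in\Gamma$, and $(\mathbf k,\log)$ an ordered field with surjective logarithm. Let $G=\Gamma^{\mathbf k}$ with prelogarithmic section $l_\sigma$, and consider the EL-series field $\mathbf k((\Gamma^{\mathbf k}))^{\sigma EL}$ with logarithm $\mathrm{Log}_\sigma$. Then for every $n\ge0$ and every $g\in G^{\#n}$ with $g>1$ we have $v(\mathrm{Log}_\sigma(g))<g$, where $v$ is the canonical valuation on $\mathbf k((G^{\#(n+1)}))$.
   Context: Let $\mathbf k$ be an ordered field and $(G,\cdot,<)$ a totally ordered abelian group. $\mathbf k((G))$ denotes the field of generalized power series $\alpha=\sum_{g\in G}\alpha(g)\,g$ with anti-well-ordered support, usual operations, canonical valuation $v(\alpha)=\max\operatorname{supp}\alpha$ and ordering $\alpha>0$ iff $\alpha(v(\alpha))>0$. $\mathbf k((S))=\{\alpha:\operatorname{supp}\alpha\subseteq S\}$, $G^{>1}=\{g>1\}$. Hahn group: $\Gamma^{\mathbf k}$ is the set of formal products $g=\prod_{\gamma\in\Gamma}x_\gamma^{g(\gamma)}$, $g(\gamma)\in\mathbf k$, with anti-well-ordered support $\{\gamma:g(\gamma)\ne0\}\subseteq\Gamma$, multiplied pointwise, ordered by $g>1$ iff $g(\gamma)>0$ for $\gamma=\max\operatorname{supp}g$. The prelogarithmic section $l_\sigma:\Gamma^{\mathbf k}\to\mathbf k((G^{>1}))$ is $l_\sigma(\prod x_\gamma^{g(\gamma)})=\sum_\gamma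 g(\gamma)\,x_{\sigma(\gamma)}$ (here $x_{\sigma(\gamma)}\in\Gamma^{\mathbf k}$ is a monomial). A prelogarithmic section is an order-preserving group embedding $l:(G,\cdot)\to(\mathbf k((G^{>1})),+)$. Exponential extension: $G^\#$ is the ordered abelian group of formal symbols $e(\alpha)$, $\alpha\in\mathbf k((G^{>1}))$, with $e(\alpha)e(\beta)=e(\alpha+\beta)$, $e(\alpha)<e(\beta)\iff\alpha<\beta$, and $e(l(g))$ identified with $g\in G$; $l^\#(e(\alpha))=\alpha$ is a prelogarithmic section extending $l$. Iterating gives $G^{\#n}$, $l^{\#n}$; the EL-series field $\mathbf k((G))^{EL}=\bigcup_n\mathbf k((G^{\#n}))$ has logarithm $\mathrm{Log}$ given on $G^{\#n}$ by $l^{\#n}$ (and in general by $\mathrm{Log}(g\,a(1+\varepsilon))=l^{\#n}(g)+\log a+\sum_{i\ge1}(-1)^{i-1}\varepsilon^i/i$). For $(G,l)=(\Gamma^{\mathbf k},l_\sigma)$ this field is denoted $\mathbf k((\Gamma^{\mathbf k}))^{\sigma EL}$ and its logarithm $\mathrm{Log}_\sigma$. *)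

theory Defs
  imports Main
begin

text \<open>Generalized power series are represented as functions (monomial -> coefficient).
  Multiplicative monomial groups that are not Hahn groups live inside an ambient totally
  ordered type 'h with an explicit group operation.\<close>

definition supp :: "('a \<Rightarrow> 'b::zero) \<Rightarrow> 'a set" where
  "supp s = {m. s m \<noteq> 0}"

definition anti_wo :: "'a::linorder set \<Rightarrow> bool" where
  "anti_wo S \<longleftrightarrow> (\<forall>A \<subseteq> S. A \<noteq> {} \<longrightarrow> (\<exists>m\<in>A. \<forall>a\<in>A. a \<le> m))"

definition series_on :: "'a::linorder set \<Rightarrow> ('a \<Rightarrow> 'k::zero) set" where
  "series_on S = {s. anti_wo (supp s) \<and> supp s \<subseteq> S}"

definition val :: "('a::linorder \<Rightarrow> 'k::zero) \<Rightarrow> 'a" where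
  "val s = (GREATEST m. s m \<noteq> 0)"

definition ser_pos :: "('a::linorder \<Rightarrow> 'k::linordered_field) \<Rightarrow> bool" where
  "ser_pos s \<longleftrightarrow> supp s \<noteq> {} \<and> s (val s) > 0"

definition ser_less :: "('a::linorder \<Rightarrow> 'k::linordered_field) \<Rightarrow> ('a \<Rightarrow> 'k) \<Rightarrow> bool" where
  "ser_less s t \<longleftrightarrow> ser_pos (\<lambda>m. t m - s m)"

text \<open>Hahn group Gamma^k: exponent vectors g (product of x_gamma^(g gamma)) with anti-well-ordered
  support, group operation pointwise addition of exponents, ordering g > 1 iff leading exponent > 0
  (i.e. ser_less).\<close>
definition hahn_grp :: "('g::linorder \<Rightarrow> 'k::linordered_field) set" where
  "hahn_grp = series_on UNIV"

definition xmon :: "'g \<Rightarrow> ('g \<Rightarrow> 'k::linordered_field)" where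
  "xmon \<delta> = (\<lambda>\<gamma>. if \<gamma> = \<delta> then 1 else 0)"

text \<open>l_sigma(prod x_gamma^(g gamma)) = sum g(gamma) x_(sigma gamma), a series over Gamma^k.\<close>
definition l_sigma :: "('g \<Rightarrow> 'g) \<Rightarrow> ('g::linorder \<Rightarrow> 'k::linordered_field) \<Rightarrow> (('g \<Rightarrow> 'k) \<Rightarrow> 'k)" where
  "l_sigma \<sigma> g = (\<lambda>m. if \<exists>\<gamma>. m = xmon (\<sigma> \<gamma>) then g (THE \<gamma>. m = xmon (\<sigma> \<gamma>)) else 0)"

definition is_log :: "('k::linordered_field \<Rightarrow> 'k) \<Rightarrow> bool" where
  "is_log lg \<longleftrightarrow> (\<forall>x>0. \<forall>y>0. lg (x * y) = lg x + lg y) \<and> (\<forall>x>0. \<forall>y>0. x < y \<longrightarrow> lg x < lg y)"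

definition surj_log :: "('k::linordered_field \<Rightarrow> 'k) \<Rightarrow> bool" where
  "surj_log lg \<longleftrightarrow> (\<forall>y. \<exists>x>0. lg x = y)"

text \<open>(H', l') is the exponential extension (G^#, l^#) of (H, l), both realized inside the ambient
  totally ordered type 'h with monomial multiplication mul and unit one:
  H is a subset of H', H' is closed under mul, l' is an order-preserving group embedding of H'
  into the additive group of series, l' extends l, and the image of l' is exactly k((H^{>1})).
  This determines (H',l') uniquely up to isomorphism over H (e(alpha) corresponds to the
  unique element with l'-image alpha).\<close>
definition exp_ext ::
  "('h::linorder \<Rightarrow> 'h \<Rightarrow> 'h) \<Rightarrow> 'h \<Rightarrow> 'h set \<Rightarrow> ('h \<Rightarrow> 'h \<Rightarrow> 'k::linordered_field)
     \<Rightarrow> 'h set \<Rightarrow> ('h \<Rightarrow> 'h \<Rightarrow> 'k) \<Rightarrow> bool" where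
  "exp_ext mul one H l H' l' \<longleftrightarrow>
     H \<subseteq> H' \<and>
     (\<forall>a\<in>H'. \<forall>b\<in>H'. mul a b \<in> H') \<and>
     (\<forall>a\<in>H'. \<forall>b\<in>H'. l' (mul a b) = (\<lambda>m. l' a m + l' b m)) \<and>
     (\<forall>a\<in>H'. \<forall>b\<in>H'. a < b \<longrightarrow> ser_less (l' a) (l' b)) \<and>
     (\<forall>a\<in>H. l' a = l a) \<and>
     l' ` H' = series_on {h\<in>H. one < h}"

text \<open>(HS n, ls n) for n <= N is (an isomorphic copy, inside 'h, of) the tower
  (G^{#n}, l^{#n}) built from (Gamma^k, l_sigma): phi is an order-preserving group isomorphism
  of Gamma^k onto HS 0 transporting l_sigma to ls 0, and each level is the exponential
  extension of the previous one.\<close>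
definition EL_tower ::
  "('g::linorder \<Rightarrow> 'g) \<Rightarrow> (('g \<Rightarrow> 'k::linordered_field) \<Rightarrow> 'h::linorder) \<Rightarrow> ('h \<Rightarrow> 'h \<Rightarrow> 'h)
     \<Rightarrow> (nat \<Rightarrow> 'h set) \<Rightarrow> (nat \<Rightarrow> 'h \<Rightarrow> 'h \<Rightarrow> 'k) \<Rightarrow> nat \<Rightarrow> bool" where
  "EL_tower \<sigma> \<phi> mul HS ls N \<longleftrightarrow>
     \<phi> ` hahn_grp = HS 0 \<and>
     (\<forall>f\<in>hahn_grp. \<forall>g\<in>hahn_grp. \<phi> (\<lambda>\<gamma>. f \<gamma> + g \<gamma>) = mul (\<phi> f) (\<phi> g)) \<and>
     (\<forall>f\<in>hahn_grp. \<forall>g\<in>hahn_grp. ser_less f g \<longrightarrow> \<phi> f < \<phi> g) \<and>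
     (\<forall>f\<in>hahn_grp. ls 0 (\<phi> f) =
        (\<lambda>h. if h \<in> HS 0 then l_sigma \<sigma> f (the_inv_into hahn_grp \<phi> h) else 0)) \<and>
     (\<forall>n<N. exp_ext mul (\<phi> (\<lambda>_. 0)) (HS n) (ls n) (HS (Suc n)) (ls (Suc n)))"

end

theory Submission
  imports Defs
begin

lemma val_eq:
  assumes "s M \<noteq> 0" "\<forall>m. s m \<noteq> 0 \<longrightarrow> m \<le> M"
  shows "val s = M"
  unfolding val_def by (rule Greatest_equality) (use assms in auto)

lemma ser_posI:
  fixes s :: "'a::linorder \<Rightarrow> 'k::linordered_field"
  assumes "s M > 0" "\<forall>m. s m \<noteq> 0 \<longrightarrow> m \<le> M"
  shows "ser_pos s"
proof -
  have "s M \<noteq> 0" using assms by auto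
  then have "val s = M" using val_eq assms by blast
  moreover have "supp s \<noteq> {}" using \<open>s M \<noteq> 0\<close> unfolding supp_def by blast
  ultimately show ?thesis using assms unfolding ser_pos_def by simp
qed

lemma exists_max:
  assumes "anti_wo (supp s)" "supp s \<noteq> {}"
  shows "\<exists>M. s M \<noteq> 0 \<and> (\<forall>m. s m \<noteq> 0 \<longrightarrow> m \<le> M)"
  using assms unfolding anti_wo_def supp_def by (metis (mono_tags, lifting) mem_Collect_eq order_refl)

lemma ser_less_asym:
  fixes s t :: "'a::linorder \<Rightarrow> 'k::linordered_field"
  assumes "ser_less s t" shows "\<not> ser_less t s"
proof
  assume b: "ser_less t s"
  have e: "(\<lambda>m. s m - t m \<noteq> 0) = (\<lambda>m. t m - s m \<noteq> 0)" by (auto simp: fun_eq_iff)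
  have v: "val (\<lambda>m. s m - t m) = val (\<lambda>m. t m - s m)"
    unfolding val_def using e by simp
  from assms b v show False unfolding ser_less_def ser_pos_def by auto
qed

lemma ser_less_irrefl:
  fixes s :: "'a::linorder \<Rightarrow> 'k::linordered_field"
  shows "\<not> ser_less s s"
  unfolding ser_less_def ser_pos_def supp_def by auto

lemma anti_wo_subset:
  assumes "A \<subseteq> B" "anti_wo B" shows "anti_wo A"
  using assms unfolding anti_wo_def by (meson order_trans)

lemma anti_wo_Un:
  assumes "anti_wo A" "anti_wo B" shows "anti_wo (A \<union> B)"
  unfolding anti_wo_def
proof (intro allI impI)
  fix C assume C: "C \<subseteq> A \<union> B" "C \<noteq> {}"
  have hA: "\<forall>D\<subseteq>A. D \<noteq> {} \<longrightarrow> (\<exists>m\<in>D. \<forall>x\<in>D. x \<le> m)" using assms(1) unfolding anti_wo_def .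
  have hB: "\<forall>D\<subseteq>B. D \<noteq> {} \<longrightarrow> (\<exists>m\<in>D. \<forall>x\<in>D. x \<le> m)" using assms(2) unfolding anti_wo_def .
  show "\<exists>m\<in>C. \<forall>a\<in>C. a \<le> m"
  proof (cases "C \<inter> A = {}")
    case True
    then have "C \<subseteq> B" using C by blast
    then show ?thesis using hB C by blast
  next
    case FA: False
    have "\<exists>m\<in>C \<inter> A. \<forall>x\<in>C \<inter> A. x \<le> m" using hA FA by blast
    then obtain a where a: "a \<in> C \<inter> A" "\<forall>x\<in>C \<inter> A. x \<le> a" by blast
    show ?thesis
    proof (cases "C \<inter> B = {}")
      case True
      then have "C \<subseteq> A" using C by blast
      then show ?thesis using hA C by blast
    next
      case False
      have "\<exists>m\<in>C \<inter> B. \<forall>x\<in>C \<inter> B. x \<le> m" using hB False by blast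
      then obtain b where b: "b \<in> C \<inter> B" "\<forall>x\<in>C \<inter> B. x \<le> b" by blast
      have "\<forall>x\<in>C. x \<le> max a b"
      proof
        fix x assume "x \<in> C"
        then have "x \<in> C \<inter> A \<or> x \<in> C \<inter> B" using C by blast
        then show "x \<le> max a b" using a b by (meson max.coboundedI1 max.coboundedI2)
      qed
      moreover have "max a b \<in> C" using a b by (simp add: max_def)
      ultimately show ?thesis by blast
    qed
  qed
qed

lemma ser_total:
  fixes f g :: "'a::linorder \<Rightarrow> 'k::linordered_field"
  assumes "f \<in> series_on UNIV" "g \<in> series_on UNIV" "f \<noteq> g"
  shows "ser_less f g \<or> ser_less g f"
proof -
  define d where "d = (\<lambda>m. g m - f m)"
  have "supp d \<subseteq> supp f \<union> supp g" unfolding d_def supp_def by auto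
  moreover have "anti_wo (supp f)" "anti_wo (supp g)" using assms(1,2) unfolding series_on_def by auto
  then have "anti_wo (supp f \<union> supp g)" by (rule anti_wo_Un)
  ultimately have aw: "anti_wo (supp d)" by (rule anti_wo_subset)
  obtain x where "f x \<noteq> g x" using assms(3) by (auto simp: fun_eq_iff)
  then have "d x \<noteq> 0" unfolding d_def by simp
  then have "supp d \<noteq> {}" unfolding supp_def by blast
  then obtain M where M: "d M \<noteq> 0" "\<forall>m. d m \<noteq> 0 \<longrightarrow> m \<le> M"
    using exists_max[OF aw] by blast
  show ?thesis
  proof (cases "d M > 0")
    case True
    then have "ser_pos d" using M(2) by (rule ser_posI)
    then show ?thesis unfolding ser_less_def d_def by simp
  next
    case False
    then have "(\<lambda>m. f m - g m) M > 0" using M(1) unfolding d_def by auto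
    moreover have "\<forall>m. (\<lambda>m. f m - g m) m \<noteq> 0 \<longrightarrow> m \<le> M" using M(2) unfolding d_def by auto
    ultimately have "ser_pos (\<lambda>m. f m - g m)" by (rule ser_posI)
    then show ?thesis unfolding ser_less_def by simp
  qed
qed

lemma xmon_in: "xmon a \<in> (hahn_grp :: ('g::linorder \<Rightarrow> 'k::linordered_field) set)"
proof -
  have "supp (xmon a :: 'g \<Rightarrow> 'k) = {a}" unfolding supp_def xmon_def by auto
  moreover have "anti_wo {a}" unfolding anti_wo_def by auto
  ultimately show ?thesis unfolding hahn_grp_def series_on_def by simp
qed

lemma xmon_inj:
  assumes "xmon a = (xmon b :: 'g \<Rightarrow> 'k::linordered_field)" shows "a = b"
proof -
  have "xmon a a = (xmon b a :: 'k)" using assms by simp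
  then show ?thesis by (simp add: xmon_def split: if_splits)
qed

lemma xmon_less:
  assumes "a < b"
  shows "ser_less (xmon a :: 'g::linorder \<Rightarrow> 'k::linordered_field) (xmon b)"
  unfolding ser_less_def
  by (rule ser_posI[where M=b]) (use assms in \<open>auto simp: xmon_def\<close>)

theorem mainTheorem13:
  fixes \<sigma> :: "'g::linorder \<Rightarrow> 'g"
    and lg :: "'k::linordered_field \<Rightarrow> 'k"
    and \<phi> :: "('g \<Rightarrow> 'k) \<Rightarrow> 'h::linorder"
    and mul :: "'h \<Rightarrow> 'h \<Rightarrow> 'h"
    and HS :: "nat \<Rightarrow> 'h set"
    and ls :: "nat \<Rightarrow> 'h \<Rightarrow> 'h \<Rightarrow> 'k"
    and n :: nat
  assumes "strict_mono \<sigma>"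
    and "\<forall>\<gamma>. \<sigma> \<gamma> < \<gamma>"
    and "is_log lg"
    and "surj_log lg"
    and "EL_tower \<sigma> \<phi> mul HS ls n"
  shows "\<forall>g\<in>HS n. \<phi> (\<lambda>_. 0) < g \<longrightarrow> val (ls n g) < g"
proof -
  define one where "one = \<phi> (\<lambda>_. 0)"
  note T = assms(5)[unfolded EL_tower_def]
  have img: "\<phi> ` hahn_grp = HS 0" using T by blast
  have hom: "\<forall>f\<in>hahn_grp. \<forall>g\<in>hahn_grp. \<phi> (\<lambda>\<gamma>. f \<gamma> + g \<gamma>) = mul (\<phi> f) (\<phi> g)" using T by blast
  have mon: "\<forall>f\<in>hahn_grp. \<forall>g\<in>hahn_grp. ser_less f g \<longrightarrow> \<phi> f < \<phi> g" using T by blast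
  have ls0: "\<forall>f\<in>hahn_grp. ls 0 (\<phi> f) =
        (\<lambda>h. if h \<in> HS 0 then l_sigma \<sigma> f (the_inv_into hahn_grp \<phi> h) else 0)" using T by blast
  have ext: "\<forall>k<n. exp_ext mul one (HS k) (ls k) (HS (Suc k)) (ls (Suc k))"
    using T unfolding one_def by blast
  have z_in: "(\<lambda>_. 0) \<in> (hahn_grp :: ('g \<Rightarrow> 'k) set)"
    unfolding hahn_grp_def series_on_def supp_def anti_wo_def by auto
  have one_mul: "mul one one = one"
  proof -
    have "\<phi> (\<lambda>\<gamma>. (0::'k) + 0) = mul (\<phi> (\<lambda>_. 0)) (\<phi> (\<lambda>_. 0))"
      using bspec[OF bspec[OF hom z_in] z_in] .
    then show ?thesis unfolding one_def by simp
  qed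
  have "\<phi> (\<lambda>_. 0) \<in> \<phi> ` hahn_grp" by (rule imageI[OF z_in])
  then have one_in0: "one \<in> HS 0" using img unfolding one_def by simp
  have inj: "inj_on \<phi> hahn_grp"
  proof (rule inj_onI)
    fix f g assume fg: "f \<in> hahn_grp" "g \<in> hahn_grp" "\<phi> f = \<phi> g"
    show "f = g"
    proof (rule ccontr)
      assume "f \<noteq> g"
      then have "ser_less f g \<or> ser_less g f" using ser_total fg unfolding hahn_grp_def by blast
      then show False using mon fg by force
    qed
  qed
  have one_in: "\<forall>k\<le>n. one \<in> HS k"
  proof (intro allI impI)
    fix k assume "k \<le> n" then show "one \<in> HS k"
    proof (induction k)
      case 0 then show ?case using one_in0 by simp
    next
      case (Suc k)
      then have "exp_ext mul one (HS k) (ls k) (HS (Suc k)) (ls (Suc k))" using ext by simp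
      then show ?case using Suc unfolding exp_ext_def by auto
    qed
  qed
  define Q where "Q k \<longleftrightarrow> (\<forall>g\<in>HS k. one < g \<longrightarrow>
     (\<exists>M. ls k g M \<noteq> 0 \<and> (\<forall>m. ls k g m \<noteq> 0 \<longrightarrow> m \<le> M)) \<and> (\<forall>m. ls k g m \<noteq> 0 \<longrightarrow> m < g))" for k
  have Q0: "Q 0" unfolding Q_def
  proof (intro ballI impI)
    fix g assume g: "g \<in> HS 0" "one < g"
    then obtain f where f: "f \<in> hahn_grp" "g = \<phi> f" using img by blast
    have fser: "anti_wo (supp f)" using f(1) unfolding hahn_grp_def series_on_def by simp
    have "f \<noteq> (\<lambda>_. 0)" using g f unfolding one_def by auto
    then obtain x where "f x \<noteq> 0" by (auto simp: fun_eq_iff)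
    then have "supp f \<noteq> {}" unfolding supp_def by blast
    then obtain \<gamma>0 where \<gamma>0: "f \<gamma>0 \<noteq> 0" "\<forall>m. f m \<noteq> 0 \<longrightarrow> m \<le> \<gamma>0"
      using exists_max[OF fser] by blast
    have fpos: "f \<gamma>0 > 0"
    proof (rule ccontr)
      assume "\<not> f \<gamma>0 > 0"
      then have a1: "(\<lambda>m. - f m) \<gamma>0 > 0" using \<gamma>0(1) by auto
      have a2: "\<forall>m. (\<lambda>m. - f m) m \<noteq> 0 \<longrightarrow> m \<le> \<gamma>0" using \<gamma>0(2) by auto
      have "ser_pos (\<lambda>m. - f m)" using a1 a2 by (rule ser_posI)
      then have "ser_less f (\<lambda>_. 0)" unfolding ser_less_def by simp
      then have "\<phi> f < \<phi> (\<lambda>_. 0)" using mon f(1) z_in by blast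
      then show False using g f unfolding one_def by auto
    qed
    define X where "X = (\<lambda>\<gamma>. (xmon (\<sigma> \<gamma>) :: 'g \<Rightarrow> 'k))"
    have X_in: "X \<gamma> \<in> hahn_grp" for \<gamma> unfolding X_def by (rule xmon_in)
    have Xinj: "X a = X b \<Longrightarrow> a = b" for a b
      unfolding X_def using xmon_inj strict_mono_eq[OF assms(1)] by metis
    have gdef: "ls 0 g = (\<lambda>h. if h \<in> HS 0 then l_sigma \<sigma> f (the_inv_into hahn_grp \<phi> h) else 0)"
      using ls0 f by simp
    have lsX: "l_sigma \<sigma> f (X \<gamma>) = f \<gamma>" for \<gamma>
    proof -
      have ex: "\<exists>\<gamma>'. X \<gamma> = xmon (\<sigma> \<gamma>')" unfolding X_def by blast
      have th: "(THE \<gamma>'. X \<gamma> = xmon (\<sigma> \<gamma>')) = \<gamma>"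
      proof (rule the_equality)
        show "X \<gamma> = xmon (\<sigma> \<gamma>)" unfolding X_def ..
      next
        fix \<gamma>' assume "X \<gamma> = xmon (\<sigma> \<gamma>')"
        then have "X \<gamma> = X \<gamma>'" unfolding X_def .
        then show "\<gamma>' = \<gamma>" using Xinj by metis
      qed
      show ?thesis unfolding l_sigma_def using ex th by simp
    qed
    have phiX_in: "\<phi> (X \<gamma>) \<in> HS 0" for \<gamma> using img X_in by blast
    have char1: "ls 0 g (\<phi> (X \<gamma>)) = f \<gamma>" for \<gamma>
      using gdef phiX_in the_inv_into_f_f[OF inj X_in] lsX by simp
    have char2: "\<exists>\<gamma>. f \<gamma> \<noteq> 0 \<and> h = \<phi> (X \<gamma>)" if h: "ls 0 g h \<noteq> 0" for h
    proof -
      have hin: "h \<in> HS 0" using h gdef by (auto split: if_splits)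
      then obtain m where m: "m \<in> hahn_grp" "h = \<phi> m" using img by blast
      have "l_sigma \<sigma> f m \<noteq> 0" using h gdef hin m the_inv_into_f_f[OF inj m(1)] by simp
      then obtain \<gamma> where "m = X \<gamma>" unfolding l_sigma_def X_def by (auto split: if_splits)
      then show ?thesis using char1 h m by auto
    qed
    have Xless: "\<phi> (X \<gamma>) < \<phi> f" if "f \<gamma> \<noteq> 0" for \<gamma>
    proof -
      have "\<gamma> \<le> \<gamma>0" using that \<gamma>0(2) by blast
      then have "\<sigma> \<gamma> \<le> \<sigma> \<gamma>0" using strict_mono_less_eq[OF assms(1)] by blast
      also have "\<sigma> \<gamma>0 < \<gamma>0" using assms(2) by blast
      finally have sl: "\<sigma> \<gamma> < \<gamma>0" .
      have b1: "(\<lambda>m. f m - X \<gamma> m) \<gamma>0 > 0" using fpos sl unfolding X_def xmon_def by auto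
      have b2: "\<forall>m. (\<lambda>m. f m - X \<gamma> m) m \<noteq> 0 \<longrightarrow> m \<le> \<gamma>0"
        using \<gamma>0(2) sl unfolding X_def xmon_def by (auto split: if_splits)
      have "ser_pos (\<lambda>m. f m - X \<gamma> m)" using b1 b2 by (rule ser_posI)
      then have "ser_less (X \<gamma>) f" unfolding ser_less_def .
      then show ?thesis using mon X_in f(1) by blast
    qed
    have Xmono: "\<phi> (X \<gamma>) \<le> \<phi> (X \<gamma>0)" if "f \<gamma> \<noteq> 0" for \<gamma>
    proof (cases "\<gamma> = \<gamma>0")
      case True then show ?thesis by simp
    next
      case False
      then have "\<gamma> < \<gamma>0" using that \<gamma>0(2) by force
      then have "\<sigma> \<gamma> < \<sigma> \<gamma>0" using strict_mono_less[OF assms(1)] by blast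
      then have "ser_less (X \<gamma>) (X \<gamma>0)" unfolding X_def by (rule xmon_less)
      then show ?thesis using mon X_in by (meson less_imp_le)
    qed
    show "(\<exists>M. ls 0 g M \<noteq> 0 \<and> (\<forall>m. ls 0 g m \<noteq> 0 \<longrightarrow> m \<le> M)) \<and> (\<forall>m. ls 0 g m \<noteq> 0 \<longrightarrow> m < g)"
    proof (intro conjI exI[of _ "\<phi> (X \<gamma>0)"] allI impI)
      show "ls 0 g (\<phi> (X \<gamma>0)) \<noteq> 0" using char1 \<gamma>0(1) by simp
    next
      fix m assume "ls 0 g m \<noteq> 0"
      then obtain \<gamma> where "f \<gamma> \<noteq> 0" "m = \<phi> (X \<gamma>)" using char2 by blast
      then show "m \<le> \<phi> (X \<gamma>0)" using Xmono by blast
    next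
      fix m assume "ls 0 g m \<noteq> 0"
      then obtain \<gamma> where "f \<gamma> \<noteq> 0" "m = \<phi> (X \<gamma>)" using char2 by blast
      then show "m < g" using Xless f(2) by blast
    qed
  qed
  have Qstep: "Q (Suc k)" if k: "k < n" "Q k" for k
  proof -
    have E: "exp_ext mul one (HS k) (ls k) (HS (Suc k)) (ls (Suc k))" using ext k(1) by blast
    have sub: "HS k \<subseteq> HS (Suc k)" using E unfolding exp_ext_def by simp
    have lhom: "\<forall>a\<in>HS (Suc k). \<forall>b\<in>HS (Suc k). ls (Suc k) (mul a b) = (\<lambda>m. ls (Suc k) a m + ls (Suc k) b m)"
      using E unfolding exp_ext_def by simp
    have lmon: "\<forall>a\<in>HS (Suc k). \<forall>b\<in>HS (Suc k). a < b \<longrightarrow> ser_less (ls (Suc k) a) (ls (Suc k) b)"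
      using E unfolding exp_ext_def by simp
    have lext: "\<forall>a\<in>HS k. ls (Suc k) a = ls k a" using E unfolding exp_ext_def by simp
    have limg: "ls (Suc k) ` HS (Suc k) = series_on {h\<in>HS k. one < h}" using E unfolding exp_ext_def by simp
    have oneS: "one \<in> HS (Suc k)" using one_in k(1) by simp
    have l1: "ls (Suc k) one = (\<lambda>m. ls (Suc k) one m + ls (Suc k) one m)"
      using lhom oneS one_mul by metis
    have l1z: "ls (Suc k) one m = 0" for m
    proof -
      have "ls (Suc k) one m = ls (Suc k) one m + ls (Suc k) one m" using fun_cong[OF l1, of m] by simp
      then show ?thesis by simp
    qed
    show ?thesis unfolding Q_def
    proof (intro ballI impI)
      fix g assume g: "g \<in> HS (Suc k)" "one < g"
      define \<alpha> where "\<alpha> = ls (Suc k) g"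
      have "\<alpha> \<in> series_on {h\<in>HS k. one < h}" unfolding \<alpha>_def using limg g(1) by blast
      then have aw: "anti_wo (supp \<alpha>)" and asub: "supp \<alpha> \<subseteq> {h\<in>HS k. one < h}"
        unfolding series_on_def by auto
      have "ser_less (ls (Suc k) one) \<alpha>" unfolding \<alpha>_def using lmon oneS g by blast
      then have "ser_pos (\<lambda>m. \<alpha> m - ls (Suc k) one m)" unfolding ser_less_def .
      then have apos: "ser_pos \<alpha>" using l1z by simp
      then have "supp \<alpha> \<noteq> {}" unfolding ser_pos_def by simp
      then obtain h where h: "\<alpha> h \<noteq> 0" "\<forall>m. \<alpha> m \<noteq> 0 \<longrightarrow> m \<le> h" using exists_max[OF aw] by blast
      have "val \<alpha> = h" using h by (rule val_eq)
      then have ah: "\<alpha> h > 0" using apos unfolding ser_pos_def by simp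
      have "h \<in> supp \<alpha>" using h(1) unfolding supp_def by simp
      then have hk: "h \<in> HS k" "one < h" using asub by auto
      have hQ: "\<forall>m. ls k h m \<noteq> 0 \<longrightarrow> m < h" using k(2) hk unfolding Q_def by blast
      have lh: "ls (Suc k) h = ls k h" using lext hk by blast
      have hS: "h \<in> HS (Suc k)" using sub hk by blast
      have lhh: "ls k h h = 0" using hQ by blast
      have c1: "(\<lambda>m. \<alpha> m - ls k h m) h > 0" using ah lhh by simp
      have c2: "\<forall>m. (\<lambda>m. \<alpha> m - ls k h m) m \<noteq> 0 \<longrightarrow> m \<le> h"
      proof (intro allI impI)
        fix m assume "(\<lambda>m. \<alpha> m - ls k h m) m \<noteq> 0"
        then have "\<alpha> m \<noteq> 0 \<or> ls k h m \<noteq> 0" by auto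
        then show "m \<le> h" using h(2) hQ by (meson less_imp_le)
      qed
      have "ser_pos (\<lambda>m. \<alpha> m - ls k h m)" using c1 c2 by (rule ser_posI)
      then have sl: "ser_less (ls (Suc k) h) \<alpha>" unfolding ser_less_def lh .
      have hg: "h < g"
      proof (rule ccontr)
        assume "\<not> h < g"
        then have "g = h \<or> g < h" by auto
        then show False
        proof
          assume "g = h" then show False using sl ser_less_irrefl unfolding \<alpha>_def by metis
        next
          assume "g < h"
          then have "ser_less \<alpha> (ls (Suc k) h)" unfolding \<alpha>_def using lmon g(1) hS by blast
          then show False using sl ser_less_asym by blast
        qed
      qed
      show "(\<exists>M. ls (Suc k) g M \<noteq> 0 \<and> (\<forall>m. ls (Suc k) g m \<noteq> 0 \<longrightarrow> m \<le> M)) \<and>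
            (\<forall>m. ls (Suc k) g m \<noteq> 0 \<longrightarrow> m < g)"
        using h hg unfolding \<alpha>_def by (meson le_less_trans)
    qed
  qed
  have Qall: "\<forall>k\<le>n. Q k"
  proof (intro allI impI)
    fix k assume "k \<le> n" then show "Q k"
      by (induction k) (use Q0 Qstep in auto)
  qed
  show ?thesis
  proof (intro ballI impI)
    fix g assume g: "g \<in> HS n" "\<phi> (\<lambda>_. 0) < g"
    then obtain M where M: "ls n g M \<noteq> 0" "\<forall>m. ls n g m \<noteq> 0 \<longrightarrow> m \<le> M" "\<forall>m. ls n g m \<noteq> 0 \<longrightarrow> m < g"
      using Qall unfolding Q_def one_def by blast
    then have "val (ls n g) = M" using val_eq by blast
    then show "val (ls n g) < g" using M by auto
  qed
qed

end
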